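(* For all integers $r\ge 3$ and $n\ge 1$, $$\max\Bigl\{\alpha\bigl(C_{d,q}^{\boxtimes n}\bigr)\;:\; q,d\in\mathbb N,\ q\ge 2d,\ q/d<r\Bigr\}=\frac{1+r^n(r-2)}{r-1}.$$
   Context: For positive integers $q,d$ with $q\ge 2d$, the circular graph $C_{d,q}$ has vertex set $\mathbb Z_q$, two distinct vertices $x,y$ being adjacent iff $\min\{|x-y|,q-|x-y|\}<d$ (viewing $x,y$ as integers in $\{0,\dots,q-1\}$). For a graph $G=(V,E)$, the strong product power $G^{\boxtimes n}$ has vertex set $V^n$, two distinct vertices $(u_1,\dots,u_n),(v_1,\dots,v_n)$ being adjacent iff for every $i$ either $u_i=v_i$ or $u_iv_i\in E$. $\alpha(G)$ is the maximum size of an independent set (a set of pairwise non-adjacent vertices) of $G$. *)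

theory Defs
  imports Complex_Main
begin

(* A graph is given by a vertex set V and an adjacency relation E (symmetric, irreflexive). *)

definition independent_set :: "'a set \<Rightarrow> ('a \<Rightarrow> 'a \<Rightarrow> bool) \<Rightarrow> 'a set \<Rightarrow> bool" where
  "independent_set V E S \<longleftrightarrow> S \<subseteq> V \<and> (\<forall>x\<in>S. \<forall>y\<in>S. \<not> E x y)"

definition alpha :: "'a set \<Rightarrow> ('a \<Rightarrow> 'a \<Rightarrow> bool) \<Rightarrow> nat" where
  "alpha V E = Max {card S | S. independent_set V E S}"

definition circ_vertices :: "nat \<Rightarrow> nat set" where
  "circ_vertices q = {0..<q}"

definition circ_adj :: "nat \<Rightarrow> nat \<Rightarrow> nat \<Rightarrow> nat \<Rightarrow> bool" where
  "circ_adj d q x y \<longleftrightarrow> x \<noteq> y \<and>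
     min (nat \<bar>int x - int y\<bar>) (q - nat \<bar>int x - int y\<bar>) < d"

(* strong product power G^{\<boxtimes> n}: vertices are lists of length n over V *)
definition strong_pow_vertices :: "'a set \<Rightarrow> nat \<Rightarrow> 'a list set" where
  "strong_pow_vertices V n = {xs. length xs = n \<and> set xs \<subseteq> V}"

definition strong_pow_adj :: "('a \<Rightarrow> 'a \<Rightarrow> bool) \<Rightarrow> 'a list \<Rightarrow> 'a list \<Rightarrow> bool" where
  "strong_pow_adj E us vs \<longleftrightarrow> us \<noteq> vs \<and> length us = length vs \<and>
     (\<forall>i < length us. us ! i = vs ! i \<or> E (us ! i) (vs ! i))"

definition alpha_circ_pow :: "nat \<Rightarrow> nat \<Rightarrow> nat \<Rightarrow> nat" where
  "alpha_circ_pow d q n =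
     alpha (strong_pow_vertices (circ_vertices q) n) (strong_pow_adj (circ_adj d q))"

end

theory Submission
  imports Defs
begin

definition cdist :: "int \<Rightarrow> int \<Rightarrow> int" where
  "cdist N z = min (z mod N) (N - z mod N)"

lemma cdist_mod: "cdist N (z mod N) = cdist N z"
  by (simp add: cdist_def)

lemma cdist_neg: assumes "N > 0" shows "cdist N (- z) = cdist N z"
  using assms by (auto simp: cdist_def zmod_zminus1_eq_if)

lemma cdist_cases: "cdist N z = z mod N \<or> cdist N z = N - z mod N"
  by (auto simp: cdist_def min_def)

lemma cdist_mult: assumes "N > 0" shows "cdist N (r * z) = cdist N (r * cdist N z)"
proof (cases "cdist N z = z mod N")
  case True
  then show ?thesis
    by (metis cdist_mod mod_mult_right_eq)
next
  case False
  then have c: "cdist N z = N - z mod N" using cdist_cases by metis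
  have "(r * (N - z mod N)) mod N = (- (r * z)) mod N"
  proof -
    have "(r * (N - z mod N)) mod N = (r * N - r * (z mod N)) mod N" by (simp add: algebra_simps)
    also have "\<dots> = (- (r * (z mod N))) mod N"
      by (metis (no_types, opaque_lifting) diff_0 mod_diff_left_eq mod_mult_self1_is_0 mult.commute)
    also have "\<dots> = (- (r * z)) mod N"
      by (metis mod_minus_eq mod_mult_right_eq)
    finally show ?thesis .
  qed
  then have "cdist N (r * cdist N z) = cdist N (- (r * z))"
    by (metis c cdist_mod)
  then show ?thesis using cdist_neg[OF assms] by simp
qed

lemma cdist_small: assumes "0 \<le> u" "u < N" shows "cdist N u = min u (N - u)"
  using assms by (simp add: cdist_def)

lemma cdist_le_abs: assumes "\<bar>z\<bar> < N" shows "cdist N z \<le> \<bar>z\<bar>"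
proof (cases "z \<ge> 0")
  case True then show ?thesis using assms by (simp add: cdist_def)
next
  case False
  have "(z + N) mod N = z + N" by (rule mod_pos_pos_trivial) (use False assms in auto)
  then have "z mod N = z + N" by simp
  then show ?thesis using False by (simp add: cdist_def)
qed

lemma circ_adj_cdist:
  assumes "x < q" "y < q"
  shows "circ_adj d q x y \<longleftrightarrow> x \<noteq> y \<and> cdist (int q) (int x - int y) < int d"
proof -
  have "int (min (nat \<bar>int x - int y\<bar>) (q - nat \<bar>int x - int y\<bar>)) = cdist (int q) (int x - int y)"
  proof (cases "int x - int y \<ge> 0")
    case True
    then have e: "nat \<bar>int x - int y\<bar> = x - y" by simp
    have "(int x - int y) mod int q = int x - int y" using True assms by simp
    then show ?thesis using assms True unfolding e by (simp add: cdist_def min_def of_nat_diff) arith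
  next
    case False
    then have e: "nat \<bar>int x - int y\<bar> = y - x" by simp
    have "(int x - int y + int q) mod int q = int x - int y + int q"
      by (rule mod_pos_pos_trivial) (use False assms in auto)
    then have "(int x - int y) mod int q = int x - int y + int q" by simp
    then show ?thesis using assms False unfolding e by (simp add: cdist_def min_def of_nat_diff) arith
  qed
  then show ?thesis unfolding circ_adj_def by linarith
qed

fun G :: "int \<Rightarrow> nat \<Rightarrow> int" where
  "G r 0 = 0" | "G r (Suc k) = 1 + r * G r k"

definition F :: "int \<Rightarrow> nat \<Rightarrow> int" where "F r k = r ^ k - G r k"

lemma G_add: "G r (a + b) = G r a + r ^ a * G r b"
  by (induction a) (auto simp: algebra_simps)

lemma G_nonneg: "r \<ge> 0 \<Longrightarrow> G r k \<ge> 0"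
  by (induction k) auto

lemma F_0: "F r 0 = 1" by (simp add: F_def)

lemma F_Suc: "F r (Suc k) = r * F r k - 1"
  by (simp add: F_def algebra_simps)

lemma F_pos: assumes "r \<ge> 2" shows "F r k \<ge> 1"
proof (induction k)
  case 0 then show ?case by (simp add: F_0)
next
  case (Suc k)
  have "r * F r k \<ge> 2 * F r k" using Suc assms by (intro mult_right_mono) auto
  then show ?case using Suc unfolding F_Suc by linarith
qed

lemma cdist_range: assumes "N > 0" shows "0 \<le> cdist N z" "cdist N z < N"
proof -
  have "0 \<le> z mod N" "z mod N < N" using assms by auto
  then show "0 \<le> cdist N z" "cdist N z < N" unfolding cdist_def by auto
qed

lemma orbit:
  fixes r z N d :: int and m :: nat
  assumes r: "r \<ge> 3" and N: "N = F r (Suc m)" and d: "d = F r m" and z: "z mod N \<noteq> 0"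
  shows "\<exists>k \<le> m. cdist N (r ^ k * z) \<ge> d"
proof (rule ccontr)
  assume "\<not> ?thesis"
  then have small: "\<And>k. k \<le> m \<Longrightarrow> cdist N (r ^ k * z) < d" by force
  have d1: "d \<ge> 1" using F_pos r d by simp
  have Nd: "N = r * d - 1" using N d F_Suc by simp
  have rd: "r * d \<ge> 3 * d" using r d1 by (intro mult_right_mono) auto
  have Npos: "N > 0" using Nd rd d1 by linarith
  define b where "b k = cdist N (r ^ k * z)" for k
  have inv: "k \<le> m \<Longrightarrow> 1 \<le> b k \<and> (\<exists>\<beta>. 0 \<le> \<beta> \<and> \<beta> \<le> G r k \<and> r ^ k dvd b k + \<beta>)" for k
  proof (induction k)
    case 0
    have "z mod N \<ge> 1" "z mod N < N" using z Npos
      by (metis int_one_le_iff_zero_less order_le_less pos_mod_sign, simp)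
    then have "1 \<le> b 0" unfolding b_def cdist_def by simp
    then show ?case by (intro conjI exI[of _ 0]) auto
  next
    case (Suc k)
    then obtain \<beta> where IH: "1 \<le> b k" "0 \<le> \<beta>" "\<beta> \<le> G r k" "r ^ k dvd b k + \<beta>" by auto
    have bk: "b k < d" using small Suc.prems b_def by simp
    have rb1: "r * b k \<le> r * (d - 1)" using bk r by (intro mult_left_mono) auto
    have "r * 1 \<le> r * b k" by (rule mult_left_mono) (use IH r in auto)
    then have rb2: "r * b k \<ge> 3" using r by linarith 
    have "b (Suc k) = cdist N (r * (r ^ k * z))" by (simp add: b_def algebra_simps)
    also have "\<dots> = cdist N (r * b k)" using cdist_mult[OF Npos] b_def by simp
    also have "\<dots> = min (r * b k) (N - r * b k)"
      using rb1 rb2 Nd r by (intro cdist_small) (auto simp: algebra_simps)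
    finally have bS: "b (Suc k) = min (r * b k) (N - r * b k)" .
    have one: "1 \<le> b (Suc k)" using bS rb1 rb2 Nd r by (auto simp: algebra_simps)
    show ?case
    proof (cases "b (Suc k) = r * b k")
      case True
      show ?thesis
      proof (intro conjI exI[of _ "r * \<beta>"])
        show "0 \<le> r * \<beta>" using IH r by simp
        show "r * \<beta> \<le> G r (Suc k)" using IH r by simp (metis add_increasing mult_left_mono order_trans zero_le_one r le_numeral_extra(4) zero_le_numeral)
        show "r ^ Suc k dvd b (Suc k) + r * \<beta>" using IH(4) True
          by (metis distrib_left mult_dvd_mono dvd_refl power_Suc)
      qed (rule one)
    next
      case False
      then have bS2: "b (Suc k) = N - r * b k" using bS by (simp add: min_def split: if_splits)
      have Gm: "G r (Suc m) = G r (Suc k) + r ^ Suc k * G r (m - k)"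
        using G_add[of r "Suc k" "m - k"] Suc.prems by simp
      have NG: "N + G r (Suc k) = r ^ Suc k * (r ^ (m - k) - G r (m - k))"
      proof -
        have "r ^ Suc m = r ^ Suc k * r ^ (m - k)"
          using Suc.prems by (metis Suc_le_lessD add_Suc le_add_diff_inverse less_imp_le_nat power_add)
        then show ?thesis using N Gm by (simp add: F_def algebra_simps)
      qed
      show ?thesis
      proof (intro conjI exI[of _ "1 + r * (G r k - \<beta>)"])
        show "0 \<le> 1 + r * (G r k - \<beta>)" using IH r by simp
        show "1 + r * (G r k - \<beta>) \<le> G r (Suc k)" using IH r by simp
        have "b (Suc k) + (1 + r * (G r k - \<beta>)) = (N + G r (Suc k)) - r * (b k + \<beta>)"
          using bS2 by (simp add: algebra_simps)
        also have "r ^ Suc k dvd \<dots>" unfolding NG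
          using IH(4) by (intro dvd_diff) (auto simp: mult_dvd_mono)
        finally show "r ^ Suc k dvd b (Suc k) + (1 + r * (G r k - \<beta>))" .
      qed (rule one)
    qed
  qed
  obtain \<beta> where f: "1 \<le> b m" "0 \<le> \<beta>" "\<beta> \<le> G r m" "r ^ m dvd b m + \<beta>" using inv by auto
  have "r ^ m \<le> b m + \<beta>" using f by (intro zdvd_imp_le) auto
  then have "b m \<ge> d" using f d by (simp add: F_def)
  then show False using small[of m] b_def by simp
qed

lemma fin_spv: "finite V \<Longrightarrow> finite (strong_pow_vertices V n)"
  unfolding strong_pow_vertices_def using finite_lists_length_eq[of V n] by (simp add: conj_commute)

lemma fin_cards: "finite V \<Longrightarrow> finite {card S |S. independent_set V E S}"
  by (rule finite_subset[of _ "card ` Pow V"]) (auto simp: independent_set_def)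

lemma alpha_ge: assumes "finite V" "independent_set V E S" shows "card S \<le> alpha V E"
  unfolding alpha_def using assms fin_cards[OF assms(1)] by (intro Max_ge) auto

lemma alpha_le: assumes "finite V" "\<And>S. independent_set V E S \<Longrightarrow> card S \<le> m"
  shows "alpha V E \<le> m"
proof -
  have "independent_set V E {}" by (simp add: independent_set_def)
  then have ne: "{card S |S. independent_set V E S} \<noteq> {}" by blast
  show ?thesis unfolding alpha_def using fin_cards[OF assms(1)] ne assms(2)
    by (subst Max_le_iff) auto
qed

lemma spa_Cons: "strong_pow_adj E (x#xs) (y#ys) \<longleftrightarrow> (x#xs \<noteq> y#ys) \<and> length xs = length ys \<and>
   (x = y \<or> E x y) \<and> (\<forall>i<length xs. xs!i = ys!i \<or> E (xs!i) (ys!i))"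
  unfolding strong_pow_adj_def by (auto simp: less_Suc_eq_0_disj)

lemma card_filter_sum: "finite A \<Longrightarrow> card {x\<in>A. P x} = (\<Sum>x\<in>A. if P x then 1 else 0)"
  using sum.inter_filter[of A "\<lambda>_. 1::nat" P] by simp

lemma mod_back: fixes x i q :: int assumes "0 \<le> i" "i < q"
  shows "(x - (x - i) mod q) mod q = i"
  using assms by (simp add: mod_diff_right_eq)

lemma count_I:
  assumes "x < q" "d \<le> q" 
  shows "card {j\<in>{..<q}. (int x - int j) mod int q < int d} = d"
proof -
  define h where "h i = nat ((int x - int i) mod int q)" for i :: nat
  have qpos: "q > 0" using assms by simp
  have hi: "int (h i) = (int x - int i) mod int q" for i using qpos by (simp add: h_def)
  have bk: "i < q \<Longrightarrow> (int x - int (h i)) mod int q = int i" for i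
    unfolding hi by (rule mod_back) auto
  have eq: "{j\<in>{..<q}. (int x - int j) mod int q < int d} = h ` {..<d}"
  proof
    show "h ` {..<d} \<subseteq> {j\<in>{..<q}. (int x - int j) mod int q < int d}"
    proof
      fix j assume "j \<in> h ` {..<d}"
      then obtain i where i: "i < d" "j = h i" by auto
      have "int j < int q" using hi i qpos by simp
      then show "j \<in> {j\<in>{..<q}. (int x - int j) mod int q < int d}"
        using bk[of i] i assms by auto
    qed
  next
    show "{j\<in>{..<q}. (int x - int j) mod int q < int d} \<subseteq> h ` {..<d}"
    proof
      fix j assume j: "j \<in> {j\<in>{..<q}. (int x - int j) mod int q < int d}"
      define i where "i = nat ((int x - int j) mod int q)"
      have ii: "int i = (int x - int j) mod int q" using qpos by (simp add: i_def)
      have "i < d" using j ii by simp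
      moreover have "h i = j"
      proof -
        have "int (h i) = (int x - (int x - int j) mod int q) mod int q" using hi ii by simp
        also have "\<dots> = int j" using j by (intro mod_back) auto
        finally show ?thesis by simp
      qed
      ultimately show "j \<in> h ` {..<d}" by blast
    qed
  qed
  have "inj_on h {..<d}"
  proof
    fix i i' assume a: "i \<in> {..<d}" "i' \<in> {..<d}" "h i = h i'"
    have "i < q" "i' < q" using a assms by auto
    then have "int i = int i'" using bk[of i] bk[of i'] a(3) by metis
    then show "i = i'" by simp
  qed
  then show ?thesis unfolding eq by (simp add: card_image)
qed

lemma interval_clique:
  assumes "x < q" "y < q" "x \<noteq> y" "d \<le> q"
    and "(int x - int j) mod int q < int d" "(int y - int j) mod int q < int d"
  shows "circ_adj d q x y"
proof -
  define u where "u = (int x - int j) mod int q"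
  define w where "w = (int y - int j) mod int q"
  have qpos: "int q > 0" using assms by simp
  have u: "0 \<le> u" "u < int d" and w: "0 \<le> w" "w < int d" using assms qpos by (auto simp: u_def w_def)
  have "(u - w) mod int q = ((int x - int j) - (int y - int j)) mod int q"
    unfolding u_def w_def by (rule mod_diff_eq)
  then have m: "(u - w) mod int q = (int x - int y) mod int q" by simp
  have "cdist (int q) (int x - int y) = cdist (int q) (u - w)"
    by (metis m cdist_mod)
  also have "\<dots> \<le> \<bar>u - w\<bar>" using u w assms by (intro cdist_le_abs) auto
  also have "\<dots> < int d" using u w by auto
  finally show ?thesis using circ_adj_cdist assms by simp
qed

lemma step_bound:
  assumes d1: "1 \<le> d" "d \<le> q"
    and S: "independent_set (strong_pow_vertices {0..<q} (Suc n)) (strong_pow_adj (circ_adj d q)) S"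
  shows "d * card S \<le> q * alpha_circ_pow d q n"
proof -
  let ?V = "strong_pow_vertices {0..<q} n" and ?E = "strong_pow_adj (circ_adj d q)"
  define P where "P j x \<longleftrightarrow> (int x - int j) mod int q < int d" for j x :: nat
  define Sj where "Sj j = {v \<in> S. P j (hd v)}" for j
  have finS: "finite S" using S fin_spv[of "{0..<q}" "Suc n"]
    by (auto simp: independent_set_def intro: finite_subset)
  have Ssub: "v = hd v # tl v \<and> hd v < q \<and> tl v \<in> ?V" if "v \<in> S" for v
  proof -
    have v: "length v = Suc n" "set v \<subseteq> {0..<q}" using S that
      by (auto simp: independent_set_def strong_pow_vertices_def)
    then obtain x xs where "v = x # xs" by (cases v) auto
    then show ?thesis using v by (auto simp: strong_pow_vertices_def)
  qed
  have indep: "\<not> ?E v w" if "v \<in> S" "w \<in> S" for v w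
    using S that by (auto simp: independent_set_def)
  have each: "card (Sj j) \<le> alpha_circ_pow d q n" for j
  proof -
    have key: "?E v w" if vw: "v \<in> Sj j" "w \<in> Sj j" "v \<noteq> w"
        and tlw: "tl v = tl w \<or> ?E (tl v) (tl w)" for v w
    proof -
      have vS: "v \<in> S" "w \<in> S" "P j (hd v)" "P j (hd w)" using vw by (auto simp: Sj_def)
      have hv: "v = hd v # tl v" "hd v < q" "tl v \<in> ?V" using Ssub vS by auto
      have hw: "w = hd w # tl w" "hd w < q" "tl w \<in> ?V" using Ssub vS by auto
      have hd: "hd v = hd w \<or> circ_adj d q (hd v) (hd w)"
        using interval_clique[of "hd v" q "hd w" d j] hv hw vS d1 by (auto simp: P_def)
      have len: "length (tl v) = length (tl w)" using hv hw by (auto simp: strong_pow_vertices_def)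
      have tl: "\<forall>i<length (tl v). tl v!i = tl w!i \<or> circ_adj d q (tl v!i) (tl w!i)"
        using tlw by (auto simp: strong_pow_adj_def)
      show ?thesis using spa_Cons[of "circ_adj d q" "hd v" "tl v" "hd w" "tl w"] hv(1) hw(1) hd len tl vw(3)
        by metis
    qed
    have inj: "inj_on tl (Sj j)"
    proof
      fix v w assume "v \<in> Sj j" "w \<in> Sj j" "tl v = tl w"
      then show "v = w" using key indep by (auto simp: Sj_def)
    qed
    have ind: "independent_set ?V ?E (tl ` Sj j)"
      unfolding independent_set_def
    proof (intro conjI ballI)
      show "tl ` Sj j \<subseteq> ?V" using Ssub by (auto simp: Sj_def)
    next
      fix a b assume "a \<in> tl ` Sj j" "b \<in> tl ` Sj j"
      then obtain v w where vw: "v \<in> Sj j" "w \<in> Sj j" "a = tl v" "b = tl w" by auto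
      show "\<not> ?E a b"
      proof
        assume ab: "?E a b"
        then have "v \<noteq> w" using vw by (auto simp: strong_pow_adj_def)
        then have "?E v w" using key vw ab by auto
        then show False using indep vw by (auto simp: Sj_def)
      qed
    qed
    have "card (Sj j) = card (tl ` Sj j)" using inj by (simp add: card_image)
    also have "\<dots> \<le> alpha_circ_pow d q n"
      unfolding alpha_circ_pow_def circ_vertices_def
      by (rule alpha_ge[OF fin_spv ind]) simp
    finally show ?thesis .
  qed
  have "(\<Sum>j<q. card (Sj j)) = (\<Sum>j<q. \<Sum>v\<in>S. if P j (hd v) then 1 else 0)"
    unfolding Sj_def using finS by (simp add: card_filter_sum)
  also have "\<dots> = (\<Sum>v\<in>S. \<Sum>j<q. if P j (hd v) then 1 else 0)"
    by (rule sum.swap)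
  also have "\<dots> = (\<Sum>v\<in>S. card {j\<in>{..<q}. P j (hd v)})"
    by (intro sum.cong refl card_filter_sum[symmetric]) simp
  also have "\<dots> = (\<Sum>v\<in>S. d)"
    using Ssub count_I d1 by (intro sum.cong) (auto simp: P_def)
  finally have "(\<Sum>j<q. card (Sj j)) = d * card S" by simp
  moreover have "(\<Sum>j<q. card (Sj j)) \<le> q * alpha_circ_pow d q n"
    using sum_bounded_above[of "{..<q}" "\<lambda>j. card (Sj j)" "alpha_circ_pow d q n"] each by simp
  ultimately show ?thesis by simp
qed

lemma upper:
  fixes r :: nat assumes r: "r \<ge> 3"
  shows "\<forall>q d. 1 \<le> d \<and> 2 * d \<le> q \<and> q < r * d \<longrightarrow> int (alpha_circ_pow d q n) \<le> F (int r) n"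
proof (induction n)
  case 0
  show ?case
  proof (intro allI impI)
    fix q d :: nat
    have "alpha_circ_pow d q 0 \<le> 1"
      unfolding alpha_circ_pow_def
    proof (rule alpha_le)
      show "finite (strong_pow_vertices (circ_vertices q) 0)" by (rule fin_spv) (simp add: circ_vertices_def)
      fix S assume "independent_set (strong_pow_vertices (circ_vertices q) 0) (strong_pow_adj (circ_adj d q)) S"
      then have "S \<subseteq> {[]}" by (auto simp: independent_set_def strong_pow_vertices_def)
      then show "card S \<le> 1" using card_mono[of "{[]}" S] by simp
    qed
    then show "int (alpha_circ_pow d q 0) \<le> F (int r) 0" by (simp add: F_0)
  qed
next
  case (Suc n)
  show ?case
  proof (intro allI impI)
    fix q d :: nat assume h: "1 \<le> d \<and> 2 * d \<le> q \<and> q < r * d"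
    let ?F = "F (int r) n"
    have Fp: "?F \<ge> 1" using F_pos r by simp
    have IH: "int (alpha_circ_pow d q n) \<le> ?F" using Suc h by blast
    have "alpha_circ_pow d q (Suc n) \<le> nat (F (int r) (Suc n))"
      unfolding alpha_circ_pow_def
    proof (rule alpha_le)
      show "finite (strong_pow_vertices (circ_vertices q) (Suc n))" by (rule fin_spv) (simp add: circ_vertices_def)
      fix S assume S: "independent_set (strong_pow_vertices (circ_vertices q) (Suc n)) (strong_pow_adj (circ_adj d q)) S"
      have sb: "d * card S \<le> q * alpha_circ_pow d q n"
        using step_bound[of d q n S] S h by (simp add: circ_vertices_def)
      have a: "int d * int (card S) \<le> int q * int (alpha_circ_pow d q n)"
        using sb by (metis of_nat_le_iff of_nat_mult)
      have b: "int q * int (alpha_circ_pow d q n) \<le> int q * ?F"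
        using IH by (intro mult_left_mono) auto
      have c: "int q * ?F < (int r * int d) * ?F"
        using h Fp by (intro mult_strict_right_mono) (auto simp flip: of_nat_mult)
      have "int d * int (card S) < int d * (int r * ?F)" using a b c by (simp add: algebra_simps)
      then have "int (card S) < int r * ?F" using h by (simp add: mult_less_cancel_left_pos)
      then show "card S \<le> nat (F (int r) (Suc n))" by (simp add: F_Suc)
    qed
    then show "int (alpha_circ_pow d q (Suc n)) \<le> F (int r) (Suc n)"
      using F_pos[of "int r" "Suc n"] r by linarith
  qed
qed

lemma lower:
  fixes r :: nat assumes r: "r \<ge> 3"
  shows "nat (F (int r) (Suc m)) \<le> alpha_circ_pow (nat (F (int r) m)) (nat (F (int r) (Suc m))) (Suc m)"
proof -
  define N where "N = nat (F (int r) (Suc m))"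
  define d where "d = nat (F (int r) m)"
  have Ni: "int N = F (int r) (Suc m)" using F_pos[of "int r" "Suc m"] r by (simp add: N_def)
  have di: "int d = F (int r) m" using F_pos[of "int r" m] r by (simp add: d_def)
  have Npos: "N > 0" using Ni F_pos[of "int r" "Suc m"] r by simp
  have d1: "d \<ge> 1" using di F_pos[of "int r" m] r by simp
  define L where "L t = map (\<lambda>k. (r ^ k * t) mod N) [0..<Suc m]" for t
  define S where "S = L ` {..<N}"
  have Lk: "k \<le> m \<Longrightarrow> L t ! k = (r ^ k * t) mod N" for t k
    by (simp add: L_def nth_append del: upt_Suc)
  have lenL: "length (L t) = Suc m" for t by (simp add: L_def del: upt_Suc)
  have inj: "inj_on L {..<N}"
  proof
    fix t t' assume a: "t \<in> {..<N}" "t' \<in> {..<N}" "L t = L t'"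
    have "L t ! 0 = t mod N" "L t' ! 0 = t' mod N" using Lk[of 0 t] Lk[of 0 t'] by auto
    then have "t mod N = t' mod N" using a(3) by metis
    then show "t = t'" using a(1,2) by simp
  qed
  have ind: "independent_set (strong_pow_vertices (circ_vertices N) (Suc m)) (strong_pow_adj (circ_adj d N)) S"
    unfolding independent_set_def
  proof (intro conjI ballI)
    show "S \<subseteq> strong_pow_vertices (circ_vertices N) (Suc m)"
      using Npos by (auto simp: S_def L_def strong_pow_vertices_def circ_vertices_def simp del: upt_Suc)
  next
    fix v w assume "v \<in> S" "w \<in> S"
    then obtain t t' where tt: "t < N" "t' < N" "v = L t" "w = L t'" by (auto simp: S_def)
    show "\<not> strong_pow_adj (circ_adj d N) v w"
    proof
      assume adj: "strong_pow_adj (circ_adj d N) v w"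
      then have "t \<noteq> t'" using tt by (auto simp: strong_pow_adj_def)
      define z where "z = int t - int t'"
      have "z mod int N \<noteq> 0"
      proof
        assume "z mod int N = 0"
        then have "int N dvd int t - int t'" by (simp add: z_def dvd_eq_mod_eq_0)
        then have "int t mod int N = int t' mod int N" by (simp add: mod_eq_dvd_iff)
        then show False using tt \<open>t \<noteq> t'\<close> by simp
      qed
      then obtain k where k: "k \<le> m" "cdist (int N) (int r ^ k * z) \<ge> int d"
        using orbit[of "int r" "int N" m "int d" z] r Ni di by auto
      have ck: "L t ! k = L t' ! k \<or> circ_adj d N (L t ! k) (L t' ! k)"
        using adj tt k lenL by (auto simp: strong_pow_adj_def)
      have lt: "L t ! k < N" "L t' ! k < N" using Lk k Npos by auto
      have "(int (L t ! k) - int (L t' ! k)) mod int N = (int r ^ k * z) mod int N"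
      proof -
        have "(int (L t ! k) - int (L t' ! k)) mod int N
            = ((int r ^ k * int t) mod int N - (int r ^ k * int t') mod int N) mod int N"
          using Lk k by (simp add: zmod_int)
        also have "\<dots> = (int r ^ k * int t - int r ^ k * int t') mod int N" by (rule mod_diff_eq)
        finally show ?thesis by (simp add: z_def algebra_simps)
      qed
      then have cd: "cdist (int N) (int (L t ! k) - int (L t' ! k)) \<ge> int d"
        using k(2) by (metis cdist_mod)
      show False
      proof (cases "L t ! k = L t' ! k")
        case True
        then show False using cd d1 Npos by (simp add: cdist_def)
      next
        case False
        then show False using ck circ_adj_cdist[OF lt, of d] cd by simp
      qed
    qed
  qed
  have "card S = N" using inj by (simp add: S_def card_image)
  moreover have "card S \<le> alpha_circ_pow d N (Suc m)"
    unfolding alpha_circ_pow_def by (rule alpha_ge[OF fin_spv ind]) (simp add: circ_vertices_def)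
  ultimately show ?thesis by (simp add: N_def d_def)
qed

lemma F_formula: "(int r - 1) * F (int r) n = 1 + int r ^ n * (int r - 2)"
proof (induction n)
  case 0 show ?case by (simp add: F_0)
next
  case (Suc n)
  have "(int r - 1) * F (int r) (Suc n) = int r * ((int r - 1) * F (int r) n) - (int r - 1)"
    by (simp add: F_Suc algebra_simps)
  also have "\<dots> = int r * (1 + int r ^ n * (int r - 2)) - (int r - 1)" using Suc by simp
  also have "\<dots> = 1 + int r ^ Suc n * (int r - 2)" by (simp add: algebra_simps)
  finally show ?case .
qed

theorem theorem9p1:
  fixes r n :: nat
  assumes "r \<ge> 3" and "n \<ge> 1"
  shows "(\<forall>q d. d \<ge> 1 \<and> q \<ge> 2 * d \<and> real q / real d < real r \<longrightarrow>
            real (alpha_circ_pow d q n) \<le> (1 + real r ^ n * (real r - 2)) / (real r - 1))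
       \<and> (\<exists>q d. d \<ge> 1 \<and> q \<ge> 2 * d \<and> real q / real d < real r \<and>
            real (alpha_circ_pow d q n) = (1 + real r ^ n * (real r - 2)) / (real r - 1))"
proof -
  have fr: "real_of_int (F (int r) k) = (1 + real r ^ k * (real r - 2)) / (real r - 1)" for k
  proof -
    have "real_of_int ((int r - 1) * F (int r) k) = real_of_int (1 + int r ^ k * (int r - 2))"
      by (simp only: F_formula)
    then have "(real r - 1) * real_of_int (F (int r) k) = 1 + real r ^ k * (real r - 2)" by simp
    moreover have "real r - 1 > 0" using assms by simp
    ultimately show ?thesis by (simp add: field_simps)
  qed
  have up: "real (alpha_circ_pow d q n) \<le> (1 + real r ^ n * (real r - 2)) / (real r - 1)"
    if h: "d \<ge> 1" "q \<ge> 2 * d" "real q / real d < real r" for q d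
  proof -
    have "real q < real r * real d" using h by (simp add: divide_less_eq)
    then have "q < r * d" by (metis of_nat_less_iff of_nat_mult)
    then have "int (alpha_circ_pow d q n) \<le> F (int r) n" using upper[OF assms(1)] h by blast
    then have "real (alpha_circ_pow d q n) \<le> real_of_int (F (int r) n)"
      by (metis of_int_le_iff of_int_of_nat_eq)
    then show ?thesis using fr by simp
  qed
  obtain m where m: "n = Suc m" using assms(2) by (cases n) auto
  define N where "N = nat (F (int r) (Suc m))"
  define d where "d = nat (F (int r) m)"
  have Ni: "int N = F (int r) (Suc m)" using F_pos[of "int r" "Suc m"] assms by (simp add: N_def)
  have di: "int d = F (int r) m" using F_pos[of "int r" m] assms by (simp add: d_def)
  have d1: "d \<ge> 1" using di F_pos[of "int r" m] assms by simp
  have NN: "int N = int r * int d - 1" using Ni di F_Suc by simp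
  have "int r * int d \<ge> 3 * int d" using assms by (intro mult_right_mono) auto
  then have N2: "N \<ge> 2 * d" using NN d1 by linarith
  have "real N = real r * real d - 1" using NN by (metis of_int_of_nat_eq of_int_diff of_int_mult of_int_1)
  then have Nr: "real N / real d < real r" using d1 by (simp add: divide_less_eq)
  have le: "real (alpha_circ_pow d N n) \<le> real N"
    using up[OF d1 N2 Nr] fr[of n] Ni m by (metis of_int_of_nat_eq)
  have ge: "N \<le> alpha_circ_pow d N n" using lower[OF assms(1), of m] m by (simp add: N_def d_def)
  have "real (alpha_circ_pow d N n) = (1 + real r ^ n * (real r - 2)) / (real r - 1)"
    using le ge fr[of n] Ni m by (metis antisym of_int_of_nat_eq of_nat_le_iff)
  then show ?thesis using up d1 N2 Nr by blast
qed

end
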